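(* Let $G$ be a finite group and $\alpha\in\mathbb{Z}_{\ge0}$. (i) If $(A,M)$ is a NIM-rep of the near-group fusion ring $K(G,\alpha)$ such that $M$ is a single $G$-orbit, then there are a subgroup $H\le G$ with $M\cong G/H$ as $G$-sets, and a positive integer $c$ such that $X\vartriangleright m=c\sum_{m'\in M}m'$ for all $m\in M$, and these satisfy $\alpha=c\,[G:H]-\frac{|H|}{c}$, $c$ divides $|H|$, and $c^2[G:H]\ge|H|$. (ii) Conversely, for every subgroup $H\le G$ and positive integer $c$ satisfying $\alpha=c[G:H]-|H|/c$, $c\mid|H|$ and $c^2[G:H]\ge|H|$, the free $\mathbb{Z}$-module with basis $M=\{m_{xH}: xH\in G/H\}$, with $g\vartriangleright m_{xH}=m_{gxH}$ and $X\vartriangleright m=c\sum_{m'\in M}m'$, is a NIM-rep of $K(G,\alpha)$ consisting of one $G$-orbit. Thus one-orbit NIM-reps of $K(G,\alpha)$ are parametrised by such pairs $(H,c)$.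
   Context: The near-group fusion ring $K(G,\alpha)$ is the free $\mathbb{Z}$-module with basis $G\cup\{X\}$, with multiplication given by the group law on $G$, $gX=Xg=X$ for $g\in G$, and $X^2=\sum_{g\in G}g+\alpha X$; the involution is $g^*=g^{-1}$, $X^*=X$. A NIM-rep of a fusion ring $(R,B)$ is a nonzero left $R$-module $A$ which is a free $\mathbb{Z}$-module with a fixed basis $M$, such that each $b\vartriangleright m$ ($b\in B$, $m\in M$) is a non-negative integer combination of elements of $M$, and such that for the symmetric bilinear form with $(m,m')=\delta_{m,m'}$ on $M$, $(b\vartriangleright m,m')=(m,b^*\vartriangleright m')$. For NIM-reps of $K(G,\alpha)$ each $g\in G$ permutes $M$, giving a $G$-action on $M$. *)

theory Defs
  imports "HOL-Algebra.Algebra"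
begin

datatype 'g ng_basis = Grp 'g | Xel

definition ng_basis_set :: "('g, 'b) monoid_scheme \<Rightarrow> 'g ng_basis set" where
  "ng_basis_set G = Grp ` carrier G \<union> {Xel}"

text \<open>Structure constants: coefficient of c in the product a * b in K(G,alpha).\<close>
fun ng_coeff :: "('g, 'b) monoid_scheme \<Rightarrow> nat \<Rightarrow> 'g ng_basis \<Rightarrow> 'g ng_basis \<Rightarrow> 'g ng_basis \<Rightarrow> nat" where
  "ng_coeff G \<alpha> (Grp g) (Grp h) c = (if c = Grp (g \<otimes>\<^bsub>G\<^esub> h) then 1 else 0)"
| "ng_coeff G \<alpha> (Grp g) Xel c = (if c = Xel then 1 else 0)"
| "ng_coeff G \<alpha> Xel (Grp g) c = (if c = Xel then 1 else 0)"
| "ng_coeff G \<alpha> Xel Xel (Grp k) = (if k \<in> carrier G then 1 else 0)"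
| "ng_coeff G \<alpha> Xel Xel Xel = \<alpha>"

fun ng_dual :: "('g, 'b) monoid_scheme \<Rightarrow> 'g ng_basis \<Rightarrow> 'g ng_basis" where
  "ng_dual G (Grp g) = Grp (inv\<^bsub>G\<^esub> g)"
| "ng_dual G Xel = Xel"

text \<open>A NIM-rep of K(G,alpha) with basis M, given by the matrix coefficients:
  act b m m' is the coefficient of m' in b \<rhd> m (a non-negative integer).
  The action is extended Z-linearly; the module axioms reduce to the conditions
  on basis elements below (unit acts trivially, b \<rhd> (b' \<rhd> m) = (b b') \<rhd> m).\<close>
definition ng_nimrep ::
  "('g, 'b) monoid_scheme \<Rightarrow> nat \<Rightarrow> 'm set \<Rightarrow> ('g ng_basis \<Rightarrow> 'm \<Rightarrow> 'm \<Rightarrow> nat) \<Rightarrow> bool" where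
  "ng_nimrep G \<alpha> M act \<longleftrightarrow>
     M \<noteq> {} \<and>
     (\<forall>b\<in>ng_basis_set G. \<forall>m\<in>M. \<forall>m'. m' \<notin> M \<longrightarrow> act b m m' = 0) \<and>
     (\<forall>b\<in>ng_basis_set G. \<forall>m\<in>M. finite {m'\<in>M. act b m m' \<noteq> 0}) \<and>
     (\<forall>m\<in>M. \<forall>m'\<in>M. act (Grp \<one>\<^bsub>G\<^esub>) m m' = (if m' = m then 1 else 0)) \<and>
     (\<forall>b\<in>ng_basis_set G. \<forall>b'\<in>ng_basis_set G. \<forall>m\<in>M. \<forall>m''\<in>M.
        (\<Sum>m'\<in>{m'\<in>M. act b' m m' \<noteq> 0}. act b' m m' * act b m' m'')
        = (\<Sum>c\<in>ng_basis_set G. ng_coeff G \<alpha> b b' c * act c m m'')) \<and>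
     (\<forall>b\<in>ng_basis_set G. \<forall>m\<in>M. \<forall>m'\<in>M. act b m m' = act (ng_dual G b) m' m)"

text \<open>g \<rhd> m = m' (as elements of the module).\<close>
definition ng_gmaps ::
  "('g ng_basis \<Rightarrow> 'm \<Rightarrow> 'm \<Rightarrow> nat) \<Rightarrow> 'g \<Rightarrow> 'm \<Rightarrow> 'm \<Rightarrow> bool" where
  "ng_gmaps act g m m' \<longleftrightarrow> (\<forall>m''. act (Grp g) m m'' = (if m'' = m' then 1 else 0))"

definition ng_one_orbit ::
  "('g, 'b) monoid_scheme \<Rightarrow> 'm set \<Rightarrow> ('g ng_basis \<Rightarrow> 'm \<Rightarrow> 'm \<Rightarrow> nat) \<Rightarrow> bool" where
  "ng_one_orbit G M act \<longleftrightarrow> (\<exists>m0\<in>M. \<forall>m\<in>M. \<exists>g\<in>carrier G. ng_gmaps act g m0 m)"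

definition left_cosets :: "('g, 'b) monoid_scheme \<Rightarrow> 'g set \<Rightarrow> 'g set set" where
  "left_cosets G H = (\<lambda>x. x <#\<^bsub>G\<^esub> H) ` carrier G"

definition ng_coset_act ::
  "('g, 'b) monoid_scheme \<Rightarrow> 'g set \<Rightarrow> nat \<Rightarrow> 'g ng_basis \<Rightarrow> 'g set \<Rightarrow> 'g set \<Rightarrow> nat" where
  "ng_coset_act G H c b m m' =
     (case b of Grp g \<Rightarrow> (if m' = g <#\<^bsub>G\<^esub> m then 1 else 0)
              | Xel \<Rightarrow> (if m' \<in> left_cosets G H then c else 0))"

end

theory Submission
  imports Defs
begin


lemma basis_sum:
  assumes "finite (carrier G)"
  shows "sum f (ng_basis_set G) = (\<Sum>k\<in>carrier G. f (Grp k)) + f Xel"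
proof -
  have "sum f (ng_basis_set G) = sum f (Grp ` carrier G) + sum f {Xel}"
    unfolding ng_basis_set_def using assms by (intro sum.union_disjoint) auto
  also have "sum f (Grp ` carrier G) = (\<Sum>k\<in>carrier G. f (Grp k))"
    by (subst sum.reindex) (auto simp: inj_on_def)
  finally show ?thesis by simp
qed

lemma rhs_GG:
  assumes "group G" "finite (carrier G)" "g \<in> carrier G" "h \<in> carrier G"
  shows "(\<Sum>c\<in>ng_basis_set G. ng_coeff G \<alpha> (Grp g) (Grp h) c * act c m m'') = act (Grp (g \<otimes>\<^bsub>G\<^esub> h)) m m''"
proof -
  have "(\<Sum>k\<in>carrier G. ng_coeff G \<alpha> (Grp g) (Grp h) (Grp k) * act (Grp k) m m'')
     = (\<Sum>k\<in>carrier G. if k = g \<otimes>\<^bsub>G\<^esub> h then act (Grp k) m m'' else 0)"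
    by (intro sum.cong) auto
  also have "\<dots> = act (Grp (g \<otimes>\<^bsub>G\<^esub> h)) m m''"
    using assms by (simp add: sum.delta' group.is_monoid monoid.m_closed)
  finally show ?thesis using assms by (simp add: basis_sum)
qed

lemma rhs_GX:
  assumes "finite (carrier G)"
  shows "(\<Sum>c\<in>ng_basis_set G. ng_coeff G \<alpha> (Grp g) Xel c * act c m m'') = act Xel m m''"
  using assms by (simp add: basis_sum)

lemma rhs_XG:
  assumes "finite (carrier G)"
  shows "(\<Sum>c\<in>ng_basis_set G. ng_coeff G \<alpha> Xel (Grp g) c * act c m m'') = act Xel m m''"
  using assms by (simp add: basis_sum)

lemma rhs_XX:
  assumes "finite (carrier G)"
  shows "(\<Sum>c\<in>ng_basis_set G. ng_coeff G \<alpha> Xel Xel c * act c m m'')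
     = (\<Sum>k\<in>carrier G. act (Grp k) m m'') + \<alpha> * act Xel m m''"
  using assms by (simp add: basis_sum)

lemma basis_cases:
  assumes "b \<in> ng_basis_set G"
  obtains g where "g \<in> carrier G" "b = Grp g" | "b = Xel"
  using assms unfolding ng_basis_set_def by auto

lemma coset_eq_iff:
  assumes "group G" "subgroup H G" "x \<in> carrier G" "y \<in> carrier G"
  shows "(x <#\<^bsub>G\<^esub> H = y <#\<^bsub>G\<^esub> H) \<longleftrightarrow> inv\<^bsub>G\<^esub> x \<otimes>\<^bsub>G\<^esub> y \<in> H"
proof
  assume e: "x <#\<^bsub>G\<^esub> H = y <#\<^bsub>G\<^esub> H"
  have "y \<in> y <#\<^bsub>G\<^esub> H" using group.lcos_self[OF assms(1) assms(4,2)] .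
  then have "y \<in> x <#\<^bsub>G\<^esub> H" using e by simp
  then show "inv\<^bsub>G\<^esub> x \<otimes>\<^bsub>G\<^esub> y \<in> H"
    using subgroup.lcos_module_imp[OF assms(2,1,3)] by blast
next
  assume "inv\<^bsub>G\<^esub> x \<otimes>\<^bsub>G\<^esub> y \<in> H"
  then have "y \<in> x <#\<^bsub>G\<^esub> H" using subgroup.lcos_module_rev[OF assms(2,1,3,4)] by blast
  then show "x <#\<^bsub>G\<^esub> H = y <#\<^bsub>G\<^esub> H"
    using group.l_repr_independence[OF assms(1) _ assms(3,2)] by blast
qed



lemma (in group) lcos_in:
  assumes "subgroup H G" "m \<in> left_cosets G H" "g \<in> carrier G"
  shows "g <# m \<in> left_cosets G H"
proof -
  obtain x where x: "x \<in> carrier G" "m = x <# H" using assms(2) unfolding left_cosets_def by auto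
  have "g <# m = (g \<otimes> x) <# H"
    using x assms(1,3) by (simp add: lcos_m_assoc subgroup.subset)
  moreover have "g \<otimes> x \<in> carrier G" using x assms(3) by simp
  ultimately show ?thesis unfolding left_cosets_def by (rule image_eqI)
qed

lemma (in group) lcos_sub:
  assumes "subgroup H G" "m \<in> left_cosets G H"
  shows "m \<subseteq> carrier G"
proof -
  obtain x where x: "x \<in> carrier G" "m = x <# H" using assms(2) unfolding left_cosets_def by auto
  show ?thesis using l_coset_subset_G[OF subgroup.subset[OF assms(1)] x(1)] x(2) by simp
qed

lemma (in group) count_k:
  assumes "finite (carrier G)" "subgroup H G" "m \<in> left_cosets G H" "m'' \<in> left_cosets G H"
  shows "card {k\<in>carrier G. m'' = k <# m} = card H"
proof -
  obtain x where x: "x \<in> carrier G" "m = x <# H" using assms(3) unfolding left_cosets_def by auto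
  obtain y where y: "y \<in> carrier G" "m'' = y <# H" using assms(4) unfolding left_cosets_def by auto
  have Hs: "H \<subseteq> carrier G" using assms(2) subgroup.subset by blast
  have S: "{k\<in>carrier G. m'' = k <# m} = {k\<in>carrier G. k \<otimes> x \<in> y <# H}"
  proof (intro Collect_cong conj_cong refl)
    fix k assume k: "k \<in> carrier G"
    have "k <# m = (k \<otimes> x) <# H" using x k Hs by (simp add: lcos_m_assoc)
    then have "(m'' = k <# m) = (y <# H = (k \<otimes> x) <# H)" using y by simp
    also have "\<dots> = (inv y \<otimes> (k \<otimes> x) \<in> H)" using coset_eq_iff[OF is_group assms(2) y(1)] k x by simp
    also have "\<dots> = (k \<otimes> x \<in> y <# H)"
      using subgroup.lcos_module_rev[OF assms(2) is_group y(1)] subgroup.lcos_module_imp[OF assms(2) is_group y(1)] k x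
      by blast
    finally show "(m'' = k <# m) = (k \<otimes> x \<in> y <# H)" .
  qed
  have inj: "inj_on (\<lambda>k. k \<otimes> x) {k \<in> carrier G. k \<otimes> x \<in> y <# H}"
  proof (rule inj_onI)
    fix a b assume "a \<in> {k \<in> carrier G. k \<otimes> x \<in> y <# H}" "b \<in> {k \<in> carrier G. k \<otimes> x \<in> y <# H}" "a \<otimes> x = b \<otimes> x"
    then show "a = b" using r_cancel[of a x b] x(1) by blast
  qed
  have im: "(\<lambda>k. k \<otimes> x) ` {k \<in> carrier G. k \<otimes> x \<in> y <# H} = y <# H"
  proof
    show "y <# H \<subseteq> (\<lambda>k. k \<otimes> x) ` {k \<in> carrier G. k \<otimes> x \<in> y <# H}"
    proof
      fix z assume z: "z \<in> y <# H"
      have zc: "z \<in> carrier G" using l_coset_carrier[OF z y(1) assms(2)] .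
      have e: "z = (z \<otimes> inv x) \<otimes> x" using zc x by (simp add: m_assoc)
      have "z \<otimes> inv x \<in> {k \<in> carrier G. k \<otimes> x \<in> y <# H}" using zc x z e[symmetric] by (simp only: mem_Collect_eq m_closed inv_closed simp_thms)
      then show "z \<in> (\<lambda>k. k \<otimes> x) ` {k \<in> carrier G. k \<otimes> x \<in> y <# H}"
        using e by blast
    qed
  next
    show "(\<lambda>k. k \<otimes> x) ` {k \<in> carrier G. k \<otimes> x \<in> y <# H} \<subseteq> y <# H"
      by (rule image_subsetI) simp
  qed
  have "card {k\<in>carrier G. k \<otimes> x \<in> y <# H} = card (y <# H)"
    using card_image[OF inj] im by simp
  also have "\<dots> = card H"
  proof -
    have "y <# H \<in> lcosets H" unfolding LCOSETS_def using y(1) by blast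
    from l_card_cosets_equal[OF this Hs assms(1)] show ?thesis by simp
  qed
  finally show ?thesis using S by simp
qed



lemma (in group) part2:
  assumes fin: "finite (carrier G)"
    and sg: "subgroup H G" and cpos: "c > 0"
    and eq: "real \<alpha> = real c * real (card (left_cosets G H)) - real (card H) / real c"
  shows "ng_nimrep G \<alpha> (left_cosets G H) (ng_coset_act G H c) \<and>
         ng_one_orbit G (left_cosets G H) (ng_coset_act G H c)"
proof -
  let ?M = "left_cosets G H"
  let ?a = "ng_coset_act G H c"
  have Hs: "H \<subseteq> carrier G" using sg subgroup.subset by blast
  have HM: "H \<in> ?M" using lcos_mult_one[OF Hs] unfolding left_cosets_def by force
  have finM: "finite ?M" using fin unfolding left_cosets_def by simp
  have sub: "\<And>m. m \<in> ?M \<Longrightarrow> m \<subseteq> carrier G" using lcos_sub[OF sg] .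
  have inM: "\<And>m g. m \<in> ?M \<Longrightarrow> g \<in> carrier G \<Longrightarrow> g <# m \<in> ?M" using lcos_in[OF sg] .
  have aG: "\<And>g m m'. ?a (Grp g) m m' = (if m' = g <# m then 1 else 0)"
    by (simp add: ng_coset_act_def)
  have aX: "\<And>m m'. ?a Xel m m' = (if m' \<in> ?M then c else 0)"
    by (simp add: ng_coset_act_def)
  have eqn: "card H + \<alpha> * c = card ?M * c * c"
  proof -
    have "real \<alpha> * real c = real c * real c * real (card ?M) - real (card H)"
      using eq cpos by (simp add: field_simps)
    then have "real (card H + \<alpha> * c) = real (card ?M * c * c)" by (simp add: algebra_simps)
    then show ?thesis by (simp only: of_nat_eq_iff)
  qed
  have move: "(m'' = g <# m') = (m' = inv g <# m'')"
    if m': "m' \<in> ?M" and m'': "m'' \<in> ?M" and g: "g \<in> carrier G" for m' m'' g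
  proof
    assume "m'' = g <# m'"
    then have "inv g <# m'' = (inv g \<otimes> g) <# m'" using lcos_m_assoc[OF sub[OF m']] g by simp
    then show "m' = inv g <# m''" using g lcos_mult_one[OF sub[OF m']] by simp
  next
    assume "m' = inv g <# m''"
    then have "g <# m' = (g \<otimes> inv g) <# m''" using lcos_m_assoc[OF sub[OF m'']] g by simp
    then show "m'' = g <# m'" using g lcos_mult_one[OF sub[OF m'']] by simp
  qed
  have assoc: "(\<Sum>m'\<in>{m'\<in>?M. ?a b' m m' \<noteq> 0}. ?a b' m m' * ?a b m' m'')
        = (\<Sum>c\<in>ng_basis_set G. ng_coeff G \<alpha> b b' c * ?a c m m'')"
    if b: "b \<in> ng_basis_set G" and b': "b' \<in> ng_basis_set G" and m: "m \<in> ?M" and m'': "m'' \<in> ?M"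
    for b b' m m''
  proof -
    have single: "\<And>g. g \<in> carrier G \<Longrightarrow> {m'\<in>?M. ?a (Grp g) m m' \<noteq> 0} = {g <# m}"
      using inM m by (auto simp: aG)
    have allM: "{m'\<in>?M. ?a Xel m m' \<noteq> 0} = ?M" using cpos by (auto simp: aX)
    from b' show ?thesis
    proof (cases rule: basis_cases)
      case (1 h)
      from b show ?thesis
      proof (cases rule: basis_cases)
        case (1 g)
        have "g <# (h <# m) = (g \<otimes> h) <# m" using lcos_m_assoc[OF sub[OF m]] 1 \<open>h \<in> carrier G\<close> by simp
        note h = \<open>h \<in> carrier G\<close>
        have L: "(\<Sum>m'\<in>{m'\<in>?M. ?a (Grp h) m m' \<noteq> 0}. ?a (Grp h) m m' * ?a (Grp g) m' m'')
             = ?a (Grp g) (h <# m) m''"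
          unfolding single[OF h] by (simp add: aG)
        have R: "(\<Sum>c\<in>ng_basis_set G. ng_coeff G \<alpha> (Grp g) (Grp h) c * ?a c m m'') = ?a (Grp (g \<otimes> h)) m m''"
          by (rule rhs_GG[OF is_group fin 1(1) h])
        show ?thesis unfolding 1(2) \<open>b' = Grp h\<close> L R unfolding aG \<open>g <# (h <# m) = (g \<otimes> h) <# m\<close> ..
      next
        case 2
        note h = \<open>h \<in> carrier G\<close>
        have L: "(\<Sum>m'\<in>{m'\<in>?M. ?a (Grp h) m m' \<noteq> 0}. ?a (Grp h) m m' * ?a Xel m' m'')
             = ?a Xel (h <# m) m''"
          unfolding single[OF h] by (simp add: aG)
        have R: "(\<Sum>c\<in>ng_basis_set G. ng_coeff G \<alpha> Xel (Grp h) c * ?a c m m'') = ?a Xel m m''"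
          by (rule rhs_XG[OF fin])
        show ?thesis unfolding 2 \<open>b' = Grp h\<close> L R unfolding aX by simp
      qed
    next
      case 2
      from b show ?thesis
      proof (cases rule: basis_cases)
        case (1 g)
        have S: "{m'\<in>?M. m'' = g <# m'} = {inv g <# m''}"
          using move[OF _ m'' 1(1)] inM[OF m'' inv_closed[OF 1(1)]] by blast
        have "(\<Sum>m'\<in>?M. ?a Xel m m' * ?a (Grp g) m' m'') = (\<Sum>m'\<in>?M. if m'' = g <# m' then c else 0)"
          using 1 by (intro sum.cong) (auto simp: aG aX)
        also have "\<dots> = (\<Sum>m'\<in>{m'\<in>?M. m'' = g <# m'}. c)"
          using finM by (simp add: sum.inter_filter[symmetric])
        also have "\<dots> = c" using S by simp
        finally have F: "(\<Sum>m'\<in>?M. ?a Xel m m' * ?a (Grp g) m' m'') = c" .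
        show ?thesis unfolding \<open>b' = Xel\<close> 1(2) allM rhs_GX[OF fin] F using m'' by (simp add: aX)
      next
        case 2
        have "(\<Sum>m'\<in>?M. ?a Xel m m' * ?a Xel m' m'') = card ?M * c * c"
          using m'' by (simp add: aX)
        moreover have "(\<Sum>k\<in>carrier G. ?a (Grp k) m m'') = card H"
        proof -
          have "(\<Sum>k\<in>carrier G. ?a (Grp k) m m'') = (\<Sum>k\<in>carrier G. if m'' = k <# m then 1 else 0)"
            by (simp add: aG)
          also have "\<dots> = card {k\<in>carrier G. m'' = k <# m}"
            using fin by (simp add: sum.If_cases Int_def conj_commute)
          also have "\<dots> = card H" using count_k[OF fin sg m m''] .
          finally show ?thesis .
        qed
        ultimately show ?thesis unfolding 2 \<open>b' = Xel\<close> allM rhs_XX[OF fin] using m'' eqn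
          by (simp add: aX)
      qed
    qed
  qed
  have nim: "ng_nimrep G \<alpha> ?M ?a"
    unfolding ng_nimrep_def
  proof (intro conjI ballI allI impI)
    show "?M \<noteq> {}" using HM by auto
  next
    fix b m m' assume b: "b \<in> ng_basis_set G" and m: "m \<in> ?M" and m': "m' \<notin> ?M"
    from b show "?a b m m' = 0"
      by (cases rule: basis_cases) (use inM m m' in \<open>auto simp: aG aX\<close>)
  next
    fix b m assume "b \<in> ng_basis_set G" "m \<in> ?M"
    show "finite {m'\<in>?M. ?a b m m' \<noteq> 0}" using finM by simp
  next
    fix m m' assume "m \<in> ?M" "m' \<in> ?M"
    then show "?a (Grp \<one>) m m' = (if m' = m then 1 else 0)"
      using sub by (simp add: aG lcos_mult_one)
  next
    fix b b' m m'' assume "b \<in> ng_basis_set G" "b' \<in> ng_basis_set G" "m \<in> ?M" "m'' \<in> ?M"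
    then show "(\<Sum>m'\<in>{m'\<in>?M. ?a b' m m' \<noteq> 0}. ?a b' m m' * ?a b m' m'')
        = (\<Sum>c\<in>ng_basis_set G. ng_coeff G \<alpha> b b' c * ?a c m m'')" by (rule assoc)
  next
    fix b m m' assume b: "b \<in> ng_basis_set G" and m: "m \<in> ?M" and m': "m' \<in> ?M"
    from b show "?a b m m' = ?a (ng_dual G b) m' m"
    proof (cases rule: basis_cases)
      case (1 g)
      have "(m' = g <# m) = (m = inv g <# m')"
        using move[OF m m' 1(1)] .
      then show ?thesis using 1 by (simp add: aG)
    next
      case 2 then show ?thesis using m m' by (simp add: aX)
    qed
  qed
  have orb: "ng_one_orbit G ?M ?a"
    unfolding ng_one_orbit_def
  proof (intro bexI[OF _ HM] ballI)
    fix m assume "m \<in> ?M"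
    then obtain x where "x \<in> carrier G" "m = x <# H" unfolding left_cosets_def by auto
    then show "\<exists>g\<in>carrier G. ng_gmaps ?a g H m"
      by (intro bexI[of _ x]) (auto simp: ng_gmaps_def aG)
  qed
  show ?thesis using nim orb by simp
qed



lemma sum_support:
  assumes "finite M"
  shows "(\<Sum>m'\<in>{m'\<in>M. f m' \<noteq> (0::nat)}. f m' * g m') = (\<Sum>m'\<in>M. f m' * g m')"
  using assms by (intro sum.mono_neutral_left) auto

lemma sq_sum_one:
  assumes "finite S" "(\<Sum>m'\<in>S. f m' * f m') = (1::nat)" "\<And>m'. m' \<in> S \<Longrightarrow> f m' \<noteq> 0"
  shows "\<exists>m1. S = {m1} \<and> f m1 = 1"
proof -
  have "S \<noteq> {}" using assms(2) by auto
  then obtain m1 where m1: "m1 \<in> S" by auto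
  have "card S = (\<Sum>m'\<in>S. 1)" by simp
  also have "\<dots> \<le> (\<Sum>m'\<in>S. f m' * f m')"
    using assms(3) by (intro sum_mono) (simp add: Suc_le_eq)
  finally have "card S \<le> 1" using assms(2) by simp
  then have S: "S = {m1}" using m1 assms(1) card_le_Suc0_iff_eq[OF assms(1)] by auto
  then have "f m1 * f m1 = 1" using assms(2) by simp
  then have "f m1 = 1" by simp
  then show ?thesis using S by blast
qed

lemma if01:
  assumes "x = (if P then 1 else (0::nat))" "x = 1"
  shows P
  using assms by (cases P) auto

lemma (in group) part1:
  fixes M :: "'m set" and act :: "'a ng_basis \<Rightarrow> 'm \<Rightarrow> 'm \<Rightarrow> nat"
  assumes fin: "finite (carrier G)" and nim: "ng_nimrep G \<alpha> M act" and orb: "ng_one_orbit G M act"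
  shows "\<exists>H (c::nat). subgroup H G \<and> c > 0 \<and>
          (\<exists>\<phi>. bij_betw \<phi> M (left_cosets G H) \<and>
               (\<forall>g\<in>carrier G. \<forall>m\<in>M. \<forall>m'\<in>M.
                   ng_gmaps act g m m' \<longleftrightarrow> \<phi> m' = g <# \<phi> m)) \<and>
          (\<forall>m\<in>M. \<forall>m'\<in>M. act Xel m m' = c) \<and>
          real \<alpha> = real c * real (card (left_cosets G H)) - real (card H) / real c \<and>
          c dvd card H \<and>
          c ^ 2 * card (left_cosets G H) \<ge> card H"
proof -
  let ?B = "ng_basis_set G"
  have GB: "\<And>g. g \<in> carrier G \<Longrightarrow> Grp g \<in> ?B" unfolding ng_basis_set_def by auto
  have XB: "Xel \<in> ?B" unfolding ng_basis_set_def by auto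
  have N1: "\<And>b m m'. b \<in> ?B \<Longrightarrow> m \<in> M \<Longrightarrow> m' \<notin> M \<Longrightarrow> act b m m' = 0"
    using nim unfolding ng_nimrep_def by blast
  have N2: "\<And>b m. b \<in> ?B \<Longrightarrow> m \<in> M \<Longrightarrow> finite {m'\<in>M. act b m m' \<noteq> 0}"
    using nim unfolding ng_nimrep_def by blast
  have N3: "\<And>m. m \<in> M \<Longrightarrow> act (Grp \<one>) m m = 1"
    using nim unfolding ng_nimrep_def by auto
  have N4: "\<And>b b' m m''. b \<in> ?B \<Longrightarrow> b' \<in> ?B \<Longrightarrow> m \<in> M \<Longrightarrow> m'' \<in> M \<Longrightarrow>
        (\<Sum>m'\<in>{m'\<in>M. act b' m m' \<noteq> 0}. act b' m m' * act b m' m'')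
        = (\<Sum>c\<in>?B. ng_coeff G \<alpha> b b' c * act c m m'')"
    using nim unfolding ng_nimrep_def by blast
  have N5: "\<And>b m m'. b \<in> ?B \<Longrightarrow> m \<in> M \<Longrightarrow> m' \<in> M \<Longrightarrow> act b m m' = act (ng_dual G b) m' m"
    using nim unfolding ng_nimrep_def by blast
  have perm: "\<exists>m1. m1 \<in> M \<and> (\<forall>m''. act (Grp g) m m'' = (if m'' = m1 then 1 else 0))"
    if g: "g \<in> carrier G" and m: "m \<in> M" for g m
  proof -
    let ?f = "act (Grp g) m"
    let ?S = "{m'\<in>M. ?f m' \<noteq> 0}"
    have finS: "finite ?S" using N2[OF GB[OF g] m] .
    have "(\<Sum>m'\<in>?S. ?f m' * act (Grp (inv g)) m' m) = act (Grp (inv g \<otimes> g)) m m"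
      using N4[OF GB[OF inv_closed[OF g]] GB[OF g] m m, unfolded rhs_GG[OF is_group fin inv_closed[OF g] g]] by simp
    also have "\<dots> = 1" using g N3[OF m] by simp
    also have "(\<Sum>m'\<in>?S. ?f m' * act (Grp (inv g)) m' m) = (\<Sum>m'\<in>?S. ?f m' * ?f m')"
    proof (rule sum.cong[OF refl])
      fix m' assume "m' \<in> ?S"
      then have "act (Grp (inv g)) m' m = act (Grp (inv (inv g))) m m'"
        using N5[OF GB[OF inv_closed[OF g]] _ m, of m'] by simp
      then show "?f m' * act (Grp (inv g)) m' m = ?f m' * ?f m'" using g by simp
    qed
    finally obtain m1 where S: "?S = {m1}" and f1: "?f m1 = 1"
      using sq_sum_one[OF finS] by blast
    have m1M: "m1 \<in> M" using S by blast
    have "\<forall>m''. ?f m'' = (if m'' = m1 then 1 else 0)"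
    proof
      fix m''
      show "?f m'' = (if m'' = m1 then 1 else 0)"
      proof (cases "m'' = m1")
        case True then show ?thesis using f1 by simp
      next
        case False
        show ?thesis
        proof (cases "m'' \<in> M")
          case True
          have "m'' \<notin> {m'\<in>M. ?f m' \<noteq> 0}" unfolding S using False by simp
          then show ?thesis using True False by simp
        next
          case F2: False then show ?thesis using N1[OF GB[OF g] m F2] False by simp
        qed
      qed
    qed
    then show ?thesis using m1M by blast
  qed
  define \<sigma> where "\<sigma> g m = (SOME m1. m1 \<in> M \<and> (\<forall>m''. act (Grp g) m m'' = (if m'' = m1 then 1 else 0)))" for g m
  have \<sigma>spec: "\<sigma> g m \<in> M \<and> (\<forall>m''. act (Grp g) m m'' = (if m'' = \<sigma> g m then 1 else 0))"
    if "g \<in> carrier G" "m \<in> M" for g m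
    unfolding \<sigma>_def by (rule someI_ex[OF perm[OF that]])
  have \<sigma>M: "\<sigma> g m \<in> M" if "g \<in> carrier G" "m \<in> M" for g m
    using \<sigma>spec[OF that] by blast
  have \<sigma>act: "act (Grp g) m m'' = (if m'' = \<sigma> g m then 1 else 0)" if "g \<in> carrier G" "m \<in> M" for g m m''
    using \<sigma>spec[OF that] by blast
  have gmaps: "ng_gmaps act g m m' \<longleftrightarrow> m' = \<sigma> g m" if "g \<in> carrier G" "m \<in> M" for g m m'
  proof
    assume "ng_gmaps act g m m'"
    then have "act (Grp g) m m' = (if m' = m' then 1 else 0)" unfolding ng_gmaps_def by (rule spec)
    then have "act (Grp g) m m' = 1" by simp
    then show "m' = \<sigma> g m" by (rule if01[OF \<sigma>act[OF that, of m']])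
  next
    assume e: "m' = \<sigma> g m"
    show "ng_gmaps act g m m'" unfolding ng_gmaps_def e using \<sigma>act[OF that] by (rule allI)
  qed
  have single: "{m'\<in>M. act (Grp g) m m' \<noteq> 0} = {\<sigma> g m}" if "g \<in> carrier G" "m \<in> M" for g m
    using \<sigma>act[OF that] \<sigma>M[OF that] by auto
  have \<sigma>mult: "\<sigma> (g \<otimes> h) m = \<sigma> g (\<sigma> h m)" if g: "g \<in> carrier G" and h: "h \<in> carrier G" and m: "m \<in> M" for g h m
  proof -
    let ?m'' = "\<sigma> (g \<otimes> h) m"
    have m'': "?m'' \<in> M" using \<sigma>M[OF m_closed[OF g h] m] .
    have "(\<Sum>m'\<in>{m'\<in>M. act (Grp h) m m' \<noteq> 0}. act (Grp h) m m' * act (Grp g) m' ?m'')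
        = act (Grp (g \<otimes> h)) m ?m''"
      using N4[OF GB[OF g] GB[OF h] m m'', unfolded rhs_GG[OF is_group fin g h]] by simp
    also have "\<dots> = 1" using \<sigma>act[OF m_closed[OF g h] m] by simp
    also have "(\<Sum>m'\<in>{m'\<in>M. act (Grp h) m m' \<noteq> 0}. act (Grp h) m m' * act (Grp g) m' ?m'')
        = act (Grp g) (\<sigma> h m) ?m''"
      unfolding single[OF h m] using \<sigma>act[OF h m] by simp
    finally have "act (Grp g) (\<sigma> h m) ?m'' = 1" .
    from if01[OF \<sigma>act[OF g \<sigma>M[OF h m]] this] show ?thesis .
  qed
  have \<sigma>one: "\<sigma> \<one> m = m" if "m \<in> M" for m
    using if01[OF \<sigma>act[OF one_closed that, of m] N3[OF that]] by (rule sym)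
  have \<sigma>inv: "\<sigma> (inv g) (\<sigma> g m) = m" if "g \<in> carrier G" "m \<in> M" for g m
    using \<sigma>mult[OF inv_closed[OF that(1)] that(1) that(2), symmetric] that \<sigma>one by simp
  have \<sigma>inv2: "\<sigma> g (\<sigma> (inv g) m) = m" if "g \<in> carrier G" "m \<in> M" for g m
    using \<sigma>mult[OF that(1) inv_closed[OF that(1)] that(2), symmetric] that \<sigma>one by simp
  obtain m0 where m0: "m0 \<in> M" and orbm0: "\<forall>m\<in>M. \<exists>g\<in>carrier G. ng_gmaps act g m0 m"
    using orb unfolding ng_one_orbit_def by blast
  have orb0: "\<exists>g\<in>carrier G. m = \<sigma> g m0" if m: "m \<in> M" for m
  proof -
    obtain g where g: "g \<in> carrier G" "ng_gmaps act g m0 m" using orbm0 m by blast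
    then show ?thesis using gmaps[OF g(1) m0] by blast
  qed
  have finM: "finite M"
  proof -
    have "M \<subseteq> (\<lambda>g. \<sigma> g m0) ` carrier G" using orb0 by blast
    then show ?thesis using fin finite_subset by blast
  qed
  have X1: "act Xel m (\<sigma> (inv g) m'') = act Xel m m''" if g: "g \<in> carrier G" and m: "m \<in> M" and m'': "m'' \<in> M" for g m m''
  proof -
    have "act Xel m m'' = (\<Sum>m'\<in>{m'\<in>M. act Xel m m' \<noteq> 0}. act Xel m m' * act (Grp g) m' m'')"
      using N4[OF GB[OF g] XB m m'', unfolded rhs_GX[OF fin]] by simp
    also have "\<dots> = (\<Sum>m'\<in>M. act Xel m m' * act (Grp g) m' m'')"
      by (rule sum_support[OF finM])
    also have "\<dots> = (\<Sum>m'\<in>M. if m' = \<sigma> (inv g) m'' then act Xel m m' else 0)"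
    proof (rule sum.cong[OF refl])
      fix m' assume m': "m' \<in> M"
      have "(m'' = \<sigma> g m') = (m' = \<sigma> (inv g) m'')"
        using \<sigma>inv[OF g m'] \<sigma>inv2[OF g m''] by auto
      then show "act Xel m m' * act (Grp g) m' m'' = (if m' = \<sigma> (inv g) m'' then act Xel m m' else 0)"
        using \<sigma>act[OF g m', of m''] by simp
    qed
    also have "\<dots> = act Xel m (\<sigma> (inv g) m'')"
      using finM \<sigma>M[OF inv_closed[OF g] m''] by (simp add: sum.delta')
    finally show ?thesis by simp
  qed
  have X2: "act Xel (\<sigma> g m) m'' = act Xel m m''" if g: "g \<in> carrier G" and m: "m \<in> M" and m'': "m'' \<in> M" for g m m''
  proof -
    have "act Xel m m'' = (\<Sum>m'\<in>{m'\<in>M. act (Grp g) m m' \<noteq> 0}. act (Grp g) m m' * act Xel m' m'')"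
      using N4[OF XB GB[OF g] m m'', unfolded rhs_XG[OF fin]] by simp
    also have "\<dots> = act Xel (\<sigma> g m) m''"
      unfolding single[OF g m] using \<sigma>act[OF g m] by simp
    finally show ?thesis by simp
  qed
  define c where "c = act Xel m0 m0"
  have Xc: "act Xel m m' = c" if m: "m \<in> M" and m': "m' \<in> M" for m m'
  proof -
    obtain a where a: "a \<in> carrier G" "m = \<sigma> a m0" using orb0[OF m] by blast
    obtain b where b: "b \<in> carrier G" "m' = \<sigma> b m0" using orb0[OF m'] by blast
    have "act Xel m m' = act Xel m0 m'" using X2[OF a(1) m0 m'] a(2) by simp
    also have "\<dots> = act Xel m0 (\<sigma> (inv (inv b)) m0)" using b by simp
    also have "\<dots> = c" unfolding c_def using X1[OF inv_closed[OF b(1)] m0 m0] .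
    finally show ?thesis .
  qed
  define H where "H = {k\<in>carrier G. \<sigma> k m0 = m0}"
  have sg: "subgroup H G"
  proof (rule subgroupI)
    show "H \<subseteq> carrier G" unfolding H_def by auto
    show "H \<noteq> {}" using \<sigma>one[OF m0] unfolding H_def by auto
  next
    fix a assume "a \<in> H"
    then show "inv a \<in> H" unfolding H_def using \<sigma>inv[OF _ m0, of a] by auto
  next
    fix a b assume "a \<in> H" "b \<in> H"
    then show "a \<otimes> b \<in> H" unfolding H_def using \<sigma>mult[OF _ _ m0, of a b] by auto
  qed
  have Hs: "H \<subseteq> carrier G" unfolding H_def by auto
  have keyH: "(\<sigma> a m0 = \<sigma> b m0) \<longleftrightarrow> (a <# H = b <# H)" if a: "a \<in> carrier G" and b: "b \<in> carrier G" for a b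
  proof -
    have "(a <# H = b <# H) \<longleftrightarrow> inv a \<otimes> b \<in> H" using coset_eq_iff[OF is_group sg a b] .
    also have "\<dots> \<longleftrightarrow> \<sigma> (inv a) (\<sigma> b m0) = m0"
      unfolding H_def using \<sigma>mult[OF inv_closed[OF a] b m0] a b by simp
    also have "\<dots> \<longleftrightarrow> \<sigma> a m0 = \<sigma> b m0"
    proof
      assume e: "\<sigma> (inv a) (\<sigma> b m0) = m0"
      have "\<sigma> a (\<sigma> (inv a) (\<sigma> b m0)) = \<sigma> b m0" using \<sigma>inv2[OF a \<sigma>M[OF b m0]] .
      then show "\<sigma> a m0 = \<sigma> b m0" using e by simp
    next
      assume "\<sigma> a m0 = \<sigma> b m0"
      then show "\<sigma> (inv a) (\<sigma> b m0) = m0" using \<sigma>inv[OF a m0] by simp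
    qed
    finally show ?thesis by simp
  qed
  define rep where "rep m = (SOME g. g \<in> carrier G \<and> m = \<sigma> g m0)" for m
  have rep: "rep m \<in> carrier G" "m = \<sigma> (rep m) m0" if "m \<in> M" for m
    using someI_ex[OF orb0[OF that, unfolded Bex_def]] unfolding rep_def[symmetric] by blast+
  define \<phi> where "\<phi> m = rep m <# H" for m
  have \<phi>\<sigma>: "\<phi> (\<sigma> a m0) = a <# H" if a: "a \<in> carrier G" for a
  proof -
    have M1: "\<sigma> a m0 \<in> M" using \<sigma>M[OF a m0] .
    show ?thesis unfolding \<phi>_def using keyH[OF rep(1)[OF M1] a] rep(2)[OF M1] by simp
  qed
  have bij: "bij_betw \<phi> M (left_cosets G H)"
  proof (rule bij_betw_imageI)
    show "inj_on \<phi> M"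
    proof (rule inj_onI)
      fix m m' assume m: "m \<in> M" and m': "m' \<in> M" and e: "\<phi> m = \<phi> m'"
      have "\<sigma> (rep m) m0 = \<sigma> (rep m') m0" using keyH[OF rep(1)[OF m] rep(1)[OF m']] e unfolding \<phi>_def by simp
      then show "m = m'" using rep(2)[OF m] rep(2)[OF m'] by simp
    qed
    show "\<phi> ` M = left_cosets G H"
    proof
      show "\<phi> ` M \<subseteq> left_cosets G H" unfolding left_cosets_def \<phi>_def using rep(1) by auto
      show "left_cosets G H \<subseteq> \<phi> ` M"
      proof
        fix C assume "C \<in> left_cosets G H"
        then obtain a where a: "a \<in> carrier G" "C = a <# H" unfolding left_cosets_def by auto
        then have "C = \<phi> (\<sigma> a m0)" using \<phi>\<sigma> by simp
        then show "C \<in> \<phi> ` M" using \<sigma>M[OF a(1) m0] by blast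
      qed
    qed
  qed
  have equiv: "ng_gmaps act g m m' \<longleftrightarrow> \<phi> m' = g <# \<phi> m" if g: "g \<in> carrier G" and m: "m \<in> M" and m': "m' \<in> M" for g m m'
  proof -
    have "ng_gmaps act g m m' \<longleftrightarrow> m' = \<sigma> g m" using gmaps[OF g m] .
    also have "\<dots> \<longleftrightarrow> \<sigma> (rep m') m0 = \<sigma> (g \<otimes> rep m) m0"
      using rep(2)[OF m'] rep(2)[OF m] \<sigma>mult[OF g rep(1)[OF m] m0] by metis
    also have "\<dots> \<longleftrightarrow> rep m' <# H = (g \<otimes> rep m) <# H"
      using keyH[OF rep(1)[OF m'] m_closed[OF g rep(1)[OF m]]] .
    also have "(g \<otimes> rep m) <# H = g <# \<phi> m"
      unfolding \<phi>_def using lcos_m_assoc[OF Hs g rep(1)[OF m]] by simp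
    finally show ?thesis unfolding \<phi>_def by simp
  qed
  have cardH: "(\<Sum>k\<in>carrier G. act (Grp k) m0 m0) = card H"
  proof -
    have "(\<Sum>k\<in>carrier G. act (Grp k) m0 m0) = (\<Sum>k\<in>carrier G. if \<sigma> k m0 = m0 then 1 else 0)"
      by (rule sum.cong[OF refl]) (use \<sigma>act[OF _ m0] in auto)
    also have "\<dots> = card H" unfolding H_def using fin by (simp add: sum.If_cases Int_def conj_commute)
    finally show ?thesis .
  qed
  have eqn0: "card M * (c * c) = card H + \<alpha> * c"
  proof -
    have "(\<Sum>m'\<in>{m'\<in>M. act Xel m0 m' \<noteq> 0}. act Xel m0 m' * act Xel m' m0)
        = (\<Sum>k\<in>carrier G. act (Grp k) m0 m0) + \<alpha> * act Xel m0 m0"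
      using N4[OF XB XB m0 m0, unfolded rhs_XX[OF fin]] by simp
    moreover have "(\<Sum>m'\<in>{m'\<in>M. act Xel m0 m' \<noteq> 0}. act Xel m0 m' * act Xel m' m0) = (\<Sum>m'\<in>M. c * c)"
      unfolding sum_support[OF finM] using Xc m0 by (intro sum.cong) auto
    ultimately show ?thesis using cardH unfolding c_def by simp
  qed
  have Hpos: "card H > 0"
  proof -
    have "\<one> \<in> H" using sg subgroup.one_closed by blast
    moreover have "finite H" using fin Hs finite_subset by blast
    ultimately show ?thesis by (simp add: card_gt_0_iff) blast
  qed
  have cpos: "c > 0"
  proof (rule ccontr)
    assume "\<not> c > 0" then have "c = 0" by simp
    then show False using eqn0 Hpos by simp
  qed
  have cardM: "card M = card (left_cosets G H)" using bij_betw_same_card[OF bij] .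
  let ?n = "card (left_cosets G H)"
  have eqn: "?n * c * c = card H + \<alpha> * c" using eqn0 cardM by (simp add: mult.assoc)
  have r1: "real \<alpha> = real c * real ?n - real (card H) / real c"
  proof -
    have "real ?n * real c * real c = real (card H) + real \<alpha> * real c"
      using eqn by (metis of_nat_add of_nat_mult)
    then show ?thesis using cpos by (simp add: field_simps)
  qed
  have r2: "c dvd card H"
  proof -
    have "card H = ?n * c * c - \<alpha> * c" using eqn by simp
    moreover have "c dvd ?n * c * c" by simp
    moreover have "c dvd \<alpha> * c" by simp
    ultimately show ?thesis by (metis dvd_diff_nat)
  qed
  have r3: "c ^ 2 * ?n \<ge> card H" using eqn by (simp add: power2_eq_square algebra_simps)
  show ?thesis
    using sg cpos bij equiv Xc r1 r2 r3 by blast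
qed

theorem proposition3p14:
  fixes G :: "'g monoid" and \<alpha> :: nat
  assumes "group G" and "finite (carrier G)"
  shows
   "(\<forall>(M :: 'm set) act. ng_nimrep G \<alpha> M act \<and> ng_one_orbit G M act \<longrightarrow>
       (\<exists>H (c::nat). subgroup H G \<and> c > 0 \<and>
          (\<exists>\<phi>. bij_betw \<phi> M (left_cosets G H) \<and>
               (\<forall>g\<in>carrier G. \<forall>m\<in>M. \<forall>m'\<in>M.
                   ng_gmaps act g m m' \<longleftrightarrow> \<phi> m' = g <#\<^bsub>G\<^esub> \<phi> m)) \<and>
          (\<forall>m\<in>M. \<forall>m'\<in>M. act Xel m m' = c) \<and>
          real \<alpha> = real c * real (card (left_cosets G H)) - real (card H) / real c \<and>
          c dvd card H \<and>
          c ^ 2 * card (left_cosets G H) \<ge> card H))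
    \<and>
    (\<forall>H (c::nat). subgroup H G \<and> c > 0 \<and>
          real \<alpha> = real c * real (card (left_cosets G H)) - real (card H) / real c \<and>
          c dvd card H \<and>
          c ^ 2 * card (left_cosets G H) \<ge> card H \<longrightarrow>
        ng_nimrep G \<alpha> (left_cosets G H) (ng_coset_act G H c) \<and>
        ng_one_orbit G (left_cosets G H) (ng_coset_act G H c))"
  apply (rule conjI)
  subgoal using group.part1[OF assms] by blast
  subgoal using group.part2[OF assms] by blast
  done

end
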